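(* For the relativistic quantities $I_1$, $I_0$, $J_0$ defined in the context, let $\{I_i \leq 0\}$, $\{I_i \equiv 0\}$, $\{I_i \geq 0\}$ (and likewise $\{J_0 \leq 0\}$, etc.) denote the sets of all equations of state $\rho(p)$ such that, for all $p \leq p_{max}$, the respective quantity is $\leq 0$, $\equiv 0$, or $\geq 0$. Then \begin{align*} \{I_1 \leq 0\} &\subset \{I_0 \leq 0\} \subset \{J_0 \leq 0\} \\ \{I_1 \equiv 0\} &\equiv \{I_0 \equiv 0\}\equiv \{J_0 \equiv 0\}\\ \{I_1 \geq 0\} &\subset \{I_0 \geq 0\} \subset \{J_0 \geq 0\} \:. \end{align*}
   Context: General Relativity (units with $c=1$), static perfect fluids. Consider a barotropic equation of state $\rho(p)$ given on an interval $[0,p_{max}]$, piecewise ${\mathcal C}^0$ on $[0,p_{max}]$, with $\rho$ positive. Define $\Gamma(p) := \int_0^p dp^\prime\,(\rho(p^\prime)+ p^\prime)^{-1}$, and assume that $\Gamma(p)$ exists and that the limit $\lim_{p\rightarrow 0} \rho^{-1} p$ exists. Define \begin{align*} H_0(p) &:= \rho(p) + \rho(p) e^{-\Gamma(p)} + 6 p e^{-\Gamma(p)},\\ J_0(p) &:= \frac{1}{2 \rho}\, [1-e^{-\Gamma}] \,H_0(p) - 3 \rho^{-1} \int_0^p dp^\prime e^{-\Gamma(p^\prime)} \frac{1}{\rho(p^\prime)+p^\prime} H_0(p^\prime),\\ I_0(p) &:= 1 - e^{-\Gamma(p)} - 6 e^{-\Gamma(p)} \rho^{-1} p,\\ I_1(p)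 &:= 6 e^{-\Gamma} p \,\rho^{-2}\, \frac{d\rho}{dp} - 5 e^{-\Gamma} (\rho+p)^{-1}, \end{align*} where for $I_1$ the equation of state is required to be ${\mathcal C}^0[0,p_{max}]$ and piecewise ${\mathcal C}^1$. *)

theory Defs
  imports "HOL-Analysis.Analysis"
begin

definition Gam :: "(real \<Rightarrow> real) \<Rightarrow> real \<Rightarrow> real" where
  "Gam \<rho> p = integral {0..p} (\<lambda>q. 1 / (\<rho> q + q))"

definition H0 :: "(real \<Rightarrow> real) \<Rightarrow> real \<Rightarrow> real" where
  "H0 \<rho> p = \<rho> p + \<rho> p * exp (- Gam \<rho> p) + 6 * p * exp (- Gam \<rho> p)"

definition J0 :: "(real \<Rightarrow> real) \<Rightarrow> real \<Rightarrow> real" where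
  "J0 \<rho> p = 1 / (2 * \<rho> p) * (1 - exp (- Gam \<rho> p)) * H0 \<rho> p
     - 3 / \<rho> p * integral {0..p} (\<lambda>q. exp (- Gam \<rho> q) * (1 / (\<rho> q + q)) * H0 \<rho> q)"

definition I0 :: "(real \<Rightarrow> real) \<Rightarrow> real \<Rightarrow> real" where
  "I0 \<rho> p = 1 - exp (- Gam \<rho> p) - 6 * exp (- Gam \<rho> p) * p / \<rho> p"

definition I1 :: "(real \<Rightarrow> real) \<Rightarrow> real \<Rightarrow> real" where
  "I1 \<rho> p = 6 * exp (- Gam \<rho> p) * p / (\<rho> p)^2 * deriv \<rho> p
     - 5 * exp (- Gam \<rho> p) / (\<rho> p + p)"

definition piecewise_C0 :: "real \<Rightarrow> (real \<Rightarrow> real) \<Rightarrow> bool" where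
  "piecewise_C0 pmax \<rho> \<longleftrightarrow> (\<exists>S. finite S \<and> continuous_on ({0..pmax} - S) \<rho> \<and>
     (\<forall>x\<in>S. (0 < x \<longrightarrow> (\<exists>l. (\<rho> \<longlongrightarrow> l) (at_left x))) \<and>
             (x < pmax \<longrightarrow> (\<exists>l. (\<rho> \<longlongrightarrow> l) (at_right x)))))"

definition eos :: "real \<Rightarrow> (real \<Rightarrow> real) \<Rightarrow> bool" where
  "eos pmax \<rho> \<longleftrightarrow> 0 < pmax \<and> (\<forall>p\<in>{0..pmax}. 0 < \<rho> p) \<and> piecewise_C0 pmax \<rho> \<and>
     (\<lambda>q. 1 / (\<rho> q + q)) integrable_on {0..pmax} \<and>
     (\<exists>L. ((\<lambda>p. p / \<rho> p) \<longlongrightarrow> L) (at_right 0))"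

definition eos1 :: "real \<Rightarrow> (real \<Rightarrow> real) \<Rightarrow> bool" where
  "eos1 pmax \<rho> \<longleftrightarrow> eos pmax \<rho> \<and> \<rho> piecewise_C1_differentiable_on {0..pmax}"

definition set_I1 :: "real \<Rightarrow> (real \<Rightarrow> bool) \<Rightarrow> (real \<Rightarrow> real) set" where
  "set_I1 pmax P = {\<rho>. eos1 pmax \<rho> \<and> (\<forall>p\<in>{0<..<pmax}. \<rho> differentiable (at p) \<longrightarrow> P (I1 \<rho> p))}"

definition set_I0 :: "real \<Rightarrow> (real \<Rightarrow> bool) \<Rightarrow> (real \<Rightarrow> real) set" where
  "set_I0 pmax P = {\<rho>. eos pmax \<rho> \<and> (\<forall>p\<in>{0<..pmax}. P (I0 \<rho> p))}"

definition set_J0 :: "real \<Rightarrow> (real \<Rightarrow> bool) \<Rightarrow> (real \<Rightarrow> real) set" where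
  "set_J0 pmax P = {\<rho>. eos pmax \<rho> \<and> (\<forall>p\<in>{0<..pmax}. P (J0 \<rho> p))}"

end

theory Submission
  imports Defs
begin

lemma mono_fin:
  fixes f :: "real \<Rightarrow> real"
  assumes "a \<le> b" "continuous_on {a..b} f" "finite T"
    and "\<And>x. x \<in> {a<..<b} - T \<Longrightarrow> \<exists>d. (f has_real_derivative d) (at x) \<and> d \<le> 0"
  shows "f b \<le> f a"
proof -
  define g where "g x = (SOME d. (f has_real_derivative d) (at x) \<and> d \<le> 0)" for x
  have g: "(f has_real_derivative g x) (at x) \<and> g x \<le> 0" if "x \<in> {a<..<b} - T" for x
    using someI_ex[OF assms(4)[OF that]] unfolding g_def by blast
  define h where "h x = (if x \<in> {a<..<b} - T then g x else 0)" for x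
  have "(h has_integral (f b - f a)) {a..b}"
    apply (rule fundamental_theorem_of_calculus_interior_strong[OF assms(3,1) _ assms(2)])
    using g by (auto simp: h_def has_real_derivative_iff_has_vector_derivative[symmetric])
  then have "0 \<le> - (f b - f a)"
    by (rule has_integral_nonneg[OF has_integral_neg]) (use g in \<open>auto simp: h_def\<close>)
  then show ?thesis by simp
qed

definition ee :: "(real \<Rightarrow> real) \<Rightarrow> real \<Rightarrow> real" where
  "ee \<rho> x = exp (- Gam \<rho> x)"
definition E2 :: "(real \<Rightarrow> real) \<Rightarrow> real \<Rightarrow> real" where
  "E2 \<rho> x = integral {0..x} (\<lambda>q. (ee \<rho> q)^2)"
definition MM :: "(real \<Rightarrow> real) \<Rightarrow> real \<Rightarrow> real" where
  "MM \<rho> x = 6 * ee \<rho> x * x + 15 * x * (ee \<rho> x)^2 - 21 * E2 \<rho> x"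
definition FF :: "(real \<Rightarrow> real) \<Rightarrow> real \<Rightarrow> real" where
  "FF \<rho> x = 7/2 * E2 \<rho> x + x * ee \<rho> x - 5/2 * x * (ee \<rho> x)^2"

lemma gam_cont:
  assumes "eos pmax \<rho>" shows "continuous_on {0..pmax} (Gam \<rho>)"
proof -
  have "Gam \<rho> = (\<lambda>p. integral {0..p} (\<lambda>q. 1 / (\<rho> q + q)))" by (rule ext) (simp add: Gam_def)
  then show ?thesis using indefinite_integral_continuous_1 assms unfolding eos_def by metis
qed

lemma gam0: "Gam \<rho> 0 = 0" by (simp add: Gam_def)

lemma gam_deriv:
  assumes "eos pmax \<rho>" "0 < p" "p < pmax" "isCont \<rho> p"
  shows "(Gam \<rho> has_real_derivative 1 / (\<rho> p + p)) (at p)"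
proof -
  have int: "(\<lambda>q. 1 / (\<rho> q + q)) integrable_on {0..pmax}" and pos: "\<rho> p > 0"
    using assms unfolding eos_def by auto
  have "isCont (\<lambda>q. 1 / (\<rho> q + q)) p"
    using assms(4) pos assms(2) by (auto intro!: continuous_intros)
  then have c: "continuous (at p within ({0..pmax} - {})) (\<lambda>q. 1 / (\<rho> q + q))"
    using continuous_at_imp_continuous_at_within by blast
  have "((\<lambda>u. integral {0..u} (\<lambda>q. 1 / (\<rho> q + q))) has_vector_derivative 1 / (\<rho> p + p))
      (at p within ({0..pmax} - {}))"
    by (rule integral_has_vector_derivative_continuous_at[OF int _ _ c]) (use assms in auto)
  moreover have "at p within ({0..pmax} - {}) = at p"
    by (rule at_within_interior) (use assms in auto)
  moreover have "Gam \<rho> = (\<lambda>p. integral {0..p} (\<lambda>q. 1 / (\<rho> q + q)))" by (rule ext) (simp add: Gam_def)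
  ultimately show ?thesis by (simp add: has_real_derivative_iff_has_vector_derivative)
qed

lemma cont_points:
  assumes "eos pmax \<rho>"
  obtains S where "finite S" "\<And>p. p \<in> {0<..<pmax} - S \<Longrightarrow> isCont \<rho> p"
proof -
  obtain S where S: "finite S" "continuous_on ({0..pmax} - S) \<rho>"
    using assms unfolding eos_def piecewise_C0_def by blast
  have o: "open ({0<..<pmax} - S)" using S(1) by (auto intro: open_Diff finite_imp_closed)
  have "continuous_on ({0<..<pmax} - S) \<rho>" by (rule continuous_on_subset[OF S(2)]) auto
  then have "\<And>p. p \<in> {0<..<pmax} - S \<Longrightarrow> isCont \<rho> p"
    using continuous_on_eq_continuous_at[OF o] by blast
  then show ?thesis using S(1) that by blast
qed

lemma ee_cont:
  assumes "eos pmax \<rho>" shows "continuous_on {0..pmax} (ee \<rho>)"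
proof -
  have "ee \<rho> = (\<lambda>x. exp (- Gam \<rho> x))" by (rule ext) (simp add: ee_def)
  then show ?thesis using gam_cont[OF assms] by (auto intro!: continuous_intros)
qed

lemma ee_deriv:
  assumes "eos pmax \<rho>" "0 < p" "p < pmax" "isCont \<rho> p"
  shows "(ee \<rho> has_real_derivative - ee \<rho> p / (\<rho> p + p)) (at p)"
proof -
  have "ee \<rho> = (\<lambda>x. exp (- Gam \<rho> x))" by (rule ext) (simp add: ee_def)
  moreover have "((\<lambda>x. exp (- Gam \<rho> x)) has_real_derivative exp (- Gam \<rho> p) * (- (1 / (\<rho> p + p)))) (at p)"
    by (intro DERIV_chain2[OF DERIV_exp] DERIV_minus gam_deriv[OF assms])
  ultimately show ?thesis by (simp add: ee_def)
qed

lemma E2_cont: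
  assumes "eos pmax \<rho>" shows "continuous_on {0..pmax} (E2 \<rho>)"
proof -
  have "E2 \<rho> = (\<lambda>x. integral {0..x} (\<lambda>q. (ee \<rho> q)^2))" by (rule ext) (simp add: E2_def)
  moreover have "(\<lambda>q. (ee \<rho> q)^2) integrable_on {0..pmax}"
    using ee_cont[OF assms] by (auto intro!: integrable_continuous_real continuous_intros)
  ultimately show ?thesis using indefinite_integral_continuous_1 by metis
qed

lemma E2_deriv:
  assumes "eos pmax \<rho>" "0 < p" "p < pmax"
  shows "(E2 \<rho> has_real_derivative (ee \<rho> p)^2) (at p)"
proof -
  have "E2 \<rho> = (\<lambda>x. integral {0..x} (\<lambda>q. (ee \<rho> q)^2))" by (rule ext) (simp add: E2_def)
  moreover have "continuous_on {0..pmax} (\<lambda>q. (ee \<rho> q)^2)"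
    using ee_cont[OF assms(1)] by (auto intro!: continuous_intros)
  moreover have "at p within {0..pmax} = at p"
    by (rule at_within_interior) (use assms in auto)
  ultimately show ?thesis using integral_has_real_derivative[of 0 pmax "\<lambda>q. (ee \<rho> q)^2" p] assms
    by auto
qed

lemma MM_cont: "eos pmax \<rho> \<Longrightarrow> continuous_on {0..pmax} (MM \<rho>)"
proof -
  assume a: "eos pmax \<rho>"
  have "MM \<rho> = (\<lambda>x. 6 * ee \<rho> x * x + 15 * x * (ee \<rho> x)^2 - 21 * E2 \<rho> x)"
    by (rule ext) (simp add: MM_def)
  then show ?thesis using ee_cont[OF a] E2_cont[OF a] by (auto intro!: continuous_intros)
qed

lemma MM0: "MM \<rho> 0 = 0" by (simp add: MM_def E2_def)

lemma FF_cont: "eos pmax \<rho> \<Longrightarrow> continuous_on {0..pmax} (FF \<rho>)"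
proof -
  assume a: "eos pmax \<rho>"
  have "FF \<rho> = (\<lambda>x. 7/2 * E2 \<rho> x + x * ee \<rho> x - 5/2 * x * (ee \<rho> x)^2)"
    by (rule ext) (simp add: FF_def)
  then show ?thesis using ee_cont[OF a] E2_cont[OF a] by (auto intro!: continuous_intros)
qed

lemma FF0: "FF \<rho> 0 = 0" by (simp add: FF_def E2_def)

lemma MM_deriv:
  assumes "eos pmax \<rho>" "0 < p" "p < pmax" "isCont \<rho> p"
  shows "(MM \<rho> has_real_derivative
     6 * ee \<rho> p * (\<rho> p * (1 - ee \<rho> p) - 6 * ee \<rho> p * p) / (\<rho> p + p)) (at p)"
proof -
  have pos: "\<rho> p > 0" using assms unfolding eos_def by auto
  have E: "(ee \<rho> has_real_derivative - ee \<rho> p / (\<rho> p + p)) (at p)" by (rule ee_deriv[OF assms])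
  have d: "\<rho> p + p \<noteq> 0" using pos assms(2) by simp
  have E2: "(E2 \<rho> has_real_derivative (ee \<rho> p)^2) (at p)" by (rule E2_deriv[OF assms(1-3)])
  have "MM \<rho> = (\<lambda>x. 6 * ee \<rho> x * x + 15 * x * (ee \<rho> x)^2 - 21 * E2 \<rho> x)"
    by (rule ext) (simp add: MM_def)
  moreover have "((\<lambda>x. 6 * ee \<rho> x * x + 15 * x * (ee \<rho> x)^2 - 21 * E2 \<rho> x) has_real_derivative
     6 * ee \<rho> p * (\<rho> p * (1 - ee \<rho> p) - 6 * ee \<rho> p * p) / (\<rho> p + p)) (at p)"
    apply (rule derivative_eq_intros E E2 refl)+
    using d by (simp add: divide_simps) (simp add: algebra_simps power2_eq_square)
  ultimately show ?thesis by simp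
qed


lemma FF_deriv:
  assumes "eos pmax \<rho>" "0 < p" "p < pmax" "isCont \<rho> p"
  shows "(FF \<rho> has_real_derivative
     exp (- Gam \<rho> p) * (1 / (\<rho> p + p)) * H0 \<rho> p) (at p)"
proof -
  have pos: "\<rho> p > 0" using assms unfolding eos_def by auto
  have E: "(ee \<rho> has_real_derivative - ee \<rho> p / (\<rho> p + p)) (at p)" by (rule ee_deriv[OF assms])
  have d: "\<rho> p + p \<noteq> 0" using pos assms(2) by simp
  have E2: "(E2 \<rho> has_real_derivative (ee \<rho> p)^2) (at p)" by (rule E2_deriv[OF assms(1-3)])
  have "FF \<rho> = (\<lambda>x. 7/2 * E2 \<rho> x + x * ee \<rho> x - 5/2 * x * (ee \<rho> x)^2)"
    by (rule ext) (simp add: FF_def)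
  moreover have "((\<lambda>x. 7/2 * E2 \<rho> x + x * ee \<rho> x - 5/2 * x * (ee \<rho> x)^2) has_real_derivative
     ee \<rho> p * (1 / (\<rho> p + p)) * (\<rho> p + \<rho> p * ee \<rho> p + 6 * p * ee \<rho> p)) (at p)"
    apply (rule derivative_eq_intros E E2 refl)+
    using d by (simp add: divide_simps) (simp add: algebra_simps power2_eq_square)
  ultimately show ?thesis by (simp add: H0_def ee_def)
qed

lemma J0_id:
  assumes eos: "eos pmax \<rho>" and p: "0 < p" "p \<le> pmax"
  shows "2 * \<rho> p * J0 \<rho> p = (1 + ee \<rho> p) * (\<rho> p * (1 - ee \<rho> p) - 6 * ee \<rho> p * p) + MM \<rho> p"
proof -
  obtain S where S: "finite S" "\<And>p. p \<in> {0<..<pmax} - S \<Longrightarrow> isCont \<rho> p"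
    using cont_points[OF eos] by blast
  have pos: "\<rho> p > 0" using assms unfolding eos_def by auto
  have "((\<lambda>q. exp (- Gam \<rho> q) * (1 / (\<rho> q + q)) * H0 \<rho> q) has_integral (FF \<rho> p - FF \<rho> 0)) {0..p}"
  proof (rule fundamental_theorem_of_calculus_interior_strong[OF S(1)])
    show "0 \<le> p" using p by simp
    show "continuous_on {0..p} (FF \<rho>)" by (rule continuous_on_subset[OF FF_cont[OF eos]]) (use p in auto)
    fix x assume x: "x \<in> {0<..<p} - S"
    then have "x \<in> {0<..<pmax} - S" using p by auto
    then show "(FF \<rho> has_vector_derivative exp (- Gam \<rho> x) * (1 / (\<rho> x + x)) * H0 \<rho> x) (at x)"
      using FF_deriv[OF eos _ _ S(2)] by (auto simp: has_real_derivative_iff_has_vector_derivative[symmetric])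
  qed
  then have I: "integral {0..p} (\<lambda>q. exp (- Gam \<rho> q) * (1 / (\<rho> q + q)) * H0 \<rho> q) = FF \<rho> p"
    by (simp add: integral_unique FF0)
  show ?thesis
    unfolding J0_def I using pos
    by (simp add: H0_def FF_def MM_def ee_def[symmetric] field_simps)
qed

lemma I0_rho: "\<rho> p \<noteq> 0 \<Longrightarrow> \<rho> p * I0 \<rho> p = \<rho> p * (1 - ee \<rho> p) - 6 * ee \<rho> p * p"
  by (simp add: I0_def ee_def field_simps)

lemma I0_deriv:
  assumes eos: "eos pmax \<rho>" and x: "0 < x" "x < pmax" and D: "(\<rho> has_real_derivative d) (at x)"
  shows "(I0 \<rho> has_real_derivative I1 \<rho> x) (at x)"
proof -
  have pos: "\<rho> x > 0" using assms unfolding eos_def by auto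
  have E: "(ee \<rho> has_real_derivative - ee \<rho> x / (\<rho> x + x)) (at x)"
    by (rule ee_deriv[OF eos x DERIV_isCont[OF D]])
  have d: "\<rho> x + x \<noteq> 0" "\<rho> x \<noteq> 0" "x + \<rho> x \<noteq> 0" using pos x by auto
  have dd: "deriv \<rho> x = d" using D by (rule DERIV_imp_deriv)
  have "I0 \<rho> = (\<lambda>x. 1 - ee \<rho> x - 6 * ee \<rho> x * x / \<rho> x)"
    by (rule ext) (simp add: I0_def ee_def)
  moreover have "((\<lambda>x. 1 - ee \<rho> x - 6 * ee \<rho> x * x / \<rho> x) has_real_derivative
      6 * ee \<rho> x * x / (\<rho> x)^2 * d - 5 * ee \<rho> x / (\<rho> x + x)) (at x)"
    apply (rule derivative_eq_intros E D refl | rule d)+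
    using d by (simp add: divide_simps) (simp add: algebra_simps power2_eq_square)
  ultimately show ?thesis by (simp add: I1_def dd ee_def)
qed


lemma partB:
  assumes eos: "eos pmax \<rho>" and h: "\<forall>p\<in>{0<..pmax}. s * I0 \<rho> p \<le> 0"
    and p: "0 < p" "p \<le> pmax"
  shows "s * J0 \<rho> p \<le> 0"
proof -
  obtain S where S: "finite S" "\<And>p. p \<in> {0<..<pmax} - S \<Longrightarrow> isCont \<rho> p"
    using cont_points[OF eos] by blast
  have pos: "\<And>x. x \<in> {0..pmax} \<Longrightarrow> \<rho> x > 0" using eos unfolding eos_def by auto
  have "s * MM \<rho> p \<le> s * MM \<rho> 0"
  proof (rule mono_fin[where f="\<lambda>x. s * MM \<rho> x" and T=S])
    show "0 \<le> p" using p by simp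
    show "finite S" by (rule S(1))
    show "continuous_on {0..p} (\<lambda>x. s * MM \<rho> x)"
      by (intro continuous_intros continuous_on_subset[OF MM_cont[OF eos]]) (use p in auto)
    fix x assume x: "x \<in> {0<..<p} - S"
    then have x': "x \<in> {0<..<pmax} - S" using p by auto
    have r: "\<rho> x > 0" using pos x' by auto
    have der: "((\<lambda>x. s * MM \<rho> x) has_real_derivative
      s * (6 * ee \<rho> x * (\<rho> x * (1 - ee \<rho> x) - 6 * ee \<rho> x * x) / (\<rho> x + x))) (at x)"
      by (rule DERIV_cmult[OF MM_deriv[OF eos _ _ S(2)[OF x']]]) (use x' in auto)
    have eq: "\<rho> x * (1 - ee \<rho> x) - 6 * ee \<rho> x * x = \<rho> x * I0 \<rho> x"
      using I0_rho[of \<rho> x] r by simp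
    have nz: "\<rho> x + x \<noteq> 0" "x + \<rho> x \<noteq> 0" using r x' by auto
    have "s * (6 * ee \<rho> x * (\<rho> x * (1 - ee \<rho> x) - 6 * ee \<rho> x * x) / (\<rho> x + x))
       = (6 * ee \<rho> x * \<rho> x / (\<rho> x + x)) * (s * I0 \<rho> x)"
      unfolding eq using nz by (simp add: field_simps)
    also have "\<dots> \<le> 0"
      apply (rule mult_nonneg_nonpos)
      using r x' h by (auto simp: ee_def)
    finally show "\<exists>d. ((\<lambda>x. s * MM \<rho> x) has_real_derivative d) (at x) \<and> d \<le> 0"
      using der by blast
  qed
  then have M: "s * MM \<rho> p \<le> 0" by (simp add: MM0)
  have r: "\<rho> p > 0" using pos p by auto
  have "2 * \<rho> p * (s * J0 \<rho> p) = ((1 + ee \<rho> p) * \<rho> p) * (s * I0 \<rho> p) + s * MM \<rho> p"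
  proof -
    have eqp: "\<rho> p * (1 - ee \<rho> p) - 6 * ee \<rho> p * p = \<rho> p * I0 \<rho> p"
      using I0_rho[of \<rho> p] r by simp
    have j: "2 * \<rho> p * J0 \<rho> p = (1 + ee \<rho> p) * (\<rho> p * I0 \<rho> p) + MM \<rho> p"
      using J0_id[OF eos p] unfolding eqp .
    have "2 * \<rho> p * (s * J0 \<rho> p) = s * (2 * \<rho> p * J0 \<rho> p)" by simp
    also have "\<dots> = s * ((1 + ee \<rho> p) * (\<rho> p * I0 \<rho> p) + MM \<rho> p)" using j by simp
    finally show ?thesis by (simp add: algebra_simps)
  qed
  also have "\<dots> \<le> 0"
    using M mult_nonneg_nonpos[of "(1 + ee \<rho> p) * \<rho> p" "s * I0 \<rho> p"] r h p
    by (simp add: ee_def add_nonneg_nonneg)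
  finally have "2 * \<rho> p * (s * J0 \<rho> p) \<le> 0" .
  then show ?thesis using mult_pos_pos[of "2 * \<rho> p" "s * J0 \<rho> p"] r by linarith
qed

lemma partC:
  assumes eos: "eos pmax \<rho>" and h: "\<forall>p\<in>{0<..pmax}. J0 \<rho> p = 0"
    and p: "0 < p" "p \<le> pmax"
  shows "I0 \<rho> p = 0"
proof -
  obtain S where S: "finite S" "\<And>p. p \<in> {0<..<pmax} - S \<Longrightarrow> isCont \<rho> p"
    using cont_points[OF eos] by blast
  have pos: "\<And>x. x \<in> {0..pmax} \<Longrightarrow> \<rho> x > 0" using eos unfolding eos_def by auto
  have rel: "(1 + ee \<rho> x) * (\<rho> x * I0 \<rho> x) + MM \<rho> x = 0" if "0 < x" "x \<le> pmax" for x
    using J0_id[OF eos that] I0_rho[of \<rho> x] h that pos[of x] by simp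
  have "MM \<rho> p * MM \<rho> p \<le> MM \<rho> 0 * MM \<rho> 0"
  proof (rule mono_fin[where f="\<lambda>x. MM \<rho> x * MM \<rho> x" and T=S])
    show "0 \<le> p" using p by simp
    show "finite S" by (rule S(1))
    show "continuous_on {0..p} (\<lambda>x. MM \<rho> x * MM \<rho> x)"
      by (intro continuous_intros continuous_on_subset[OF MM_cont[OF eos]]) (use p in auto)
    fix x assume x: "x \<in> {0<..<p} - S"
    then have x': "x \<in> {0<..<pmax} - S" using p by auto
    have r: "\<rho> x > 0" using pos x' by auto
    define m where "m = 6 * ee \<rho> x * (\<rho> x * (1 - ee \<rho> x) - 6 * ee \<rho> x * x) / (\<rho> x + x)"
    have der: "((\<lambda>x. MM \<rho> x * MM \<rho> x) has_real_derivative MM \<rho> x * m + m * MM \<rho> x) (at x)"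
      unfolding m_def by (rule DERIV_mult'[OF MM_deriv[OF eos _ _ S(2)[OF x']] MM_deriv[OF eos _ _ S(2)[OF x']]]) (use x' in auto)
    have e: "ee \<rho> x > 0" by (simp add: ee_def)
    have rx: "\<rho> x * I0 \<rho> x = - MM \<rho> x / (1 + ee \<rho> x)"
      using rel[of x] x' e by (simp add: field_simps)
    have "MM \<rho> x * m + m * MM \<rho> x = - (12 * ee \<rho> x / ((1 + ee \<rho> x) * (\<rho> x + x))) * (MM \<rho> x * MM \<rho> x)"
    proof -
      have eq: "\<rho> x * (1 - ee \<rho> x) - 6 * ee \<rho> x * x = - MM \<rho> x / (1 + ee \<rho> x)"
        using I0_rho[of \<rho> x] r rx by simp
      have nz: "\<rho> x + x \<noteq> 0" "x + \<rho> x \<noteq> 0" "1 + ee \<rho> x \<noteq> 0" "ee \<rho> x + 1 \<noteq> 0"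
        using r x' e by auto
      show ?thesis unfolding m_def eq using nz by (simp add: field_simps)
    qed
    also have "\<dots> \<le> 0"
      apply (rule mult_nonpos_nonneg)
      using r x' e by auto
    finally show "\<exists>d. ((\<lambda>x. MM \<rho> x * MM \<rho> x) has_real_derivative d) (at x) \<and> d \<le> 0"
      using der by blast
  qed
  then have "MM \<rho> p * MM \<rho> p \<le> 0" by (simp add: MM0)
  then have "MM \<rho> p * MM \<rho> p = 0" using zero_le_square[of "MM \<rho> p"] by linarith
  then have "MM \<rho> p = 0" by simp
  then have "(1 + ee \<rho> p) * (\<rho> p * I0 \<rho> p) = 0" using rel[OF p] by simp
  moreover have "ee \<rho> p > 0" by (simp add: ee_def)
  moreover have "\<rho> p \<noteq> 0" using pos[of p] p by auto
  ultimately show ?thesis by simp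
qed

lemma I0_cont:
  assumes e1: "eos1 pmax \<rho>" shows "continuous_on {0..pmax} (I0 \<rho>)"
proof -
  have eos: "eos pmax \<rho>" and cr: "continuous_on {0..pmax} \<rho>"
    using e1 unfolding eos1_def piecewise_C1_differentiable_on_def by auto
  have pos: "\<And>x. x \<in> {0..pmax} \<Longrightarrow> \<rho> x \<noteq> 0" using eos unfolding eos_def by force
  have "I0 \<rho> = (\<lambda>x. 1 - ee \<rho> x - 6 * ee \<rho> x * x / \<rho> x)"
    by (rule ext) (simp add: I0_def ee_def)
  then show ?thesis using ee_cont[OF eos] cr pos by (auto intro!: continuous_intros)
qed

lemma partA:
  assumes e1: "eos1 pmax \<rho>"
    and h: "\<forall>x\<in>{0<..<pmax}. \<rho> differentiable (at x) \<longrightarrow> s * I1 \<rho> x \<le> 0"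
    and p: "0 < p" "p \<le> pmax"
  shows "s * I0 \<rho> p \<le> 0"
proof -
  have eos: "eos pmax \<rho>" and pc: "\<rho> piecewise_C1_differentiable_on {0..pmax}"
    using e1 unfolding eos1_def by auto
  obtain T D where T: "finite T" "\<forall>x\<in>{0..pmax} - T. (\<rho> has_vector_derivative D x) (at x)"
    using pc unfolding piecewise_C1_differentiable_on_def C1_differentiable_on_def by blast
  have "s * I0 \<rho> p \<le> s * I0 \<rho> 0"
  proof (rule mono_fin[where f="\<lambda>x. s * I0 \<rho> x" and T=T])
    show "0 \<le> p" using p by simp
    show "finite T" by (rule T(1))
    show "continuous_on {0..p} (\<lambda>x. s * I0 \<rho> x)"
      by (intro continuous_intros continuous_on_subset[OF I0_cont[OF e1]]) (use p in auto)
    fix x assume x: "x \<in> {0<..<p} - T"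
    then have Dx: "(\<rho> has_real_derivative D x) (at x)"
      using T(2) p by (auto simp: has_real_derivative_iff_has_vector_derivative)
    then have "\<rho> differentiable (at x)"
      using has_field_derivative_imp_has_derivative differentiableI by blast
    then have le: "s * I1 \<rho> x \<le> 0" using h x p by auto
    have "((\<lambda>x. s * I0 \<rho> x) has_real_derivative s * I1 \<rho> x) (at x)"
      by (rule DERIV_cmult[OF I0_deriv[OF eos _ _ Dx]]) (use x p in auto)
    then show "\<exists>d. ((\<lambda>x. s * I0 \<rho> x) has_real_derivative d) (at x) \<and> d \<le> 0"
      using le by blast
  qed
  then show ?thesis by (simp add: I0_def gam0)
qed

lemma partD:
  assumes e1: "eos1 pmax \<rho>" and h: "\<forall>p\<in>{0<..pmax}. I0 \<rho> p = 0"
    and x: "x \<in> {0<..<pmax}" and dx: "\<rho> differentiable (at x)"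
  shows "I1 \<rho> x = 0"
proof -
  have eos: "eos pmax \<rho>" using e1 unfolding eos1_def by auto
  have D: "(\<rho> has_real_derivative deriv \<rho> x) (at x)"
    using dx DERIV_deriv_iff_real_differentiable by blast
  have "(I0 \<rho> has_real_derivative I1 \<rho> x) (at x)"
    by (rule I0_deriv[OF eos _ _ D]) (use x in auto)
  then have "((\<lambda>_. 0) has_real_derivative I1 \<rho> x) (at x)"
    by (rule has_field_derivative_transform_within_open[where S="{0<..<pmax}"]) (use x h in auto)
  then show ?thesis using DERIV_unique DERIV_const by metis
qed

theorem proposition4:
  fixes pmax :: real
  shows "set_I1 pmax (\<lambda>x. x \<le> 0) \<subseteq> set_I0 pmax (\<lambda>x. x \<le> 0)
       \<and> set_I0 pmax (\<lambda>x. x \<le> 0) \<subseteq> set_J0 pmax (\<lambda>x. x \<le> 0)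
       \<and> set_I1 pmax (\<lambda>x. x = 0) = set_I0 pmax (\<lambda>x. x = 0) \<inter> {\<rho>. eos1 pmax \<rho>}
       \<and> set_I0 pmax (\<lambda>x. x = 0) = set_J0 pmax (\<lambda>x. x = 0)
       \<and> set_I1 pmax (\<lambda>x. x \<ge> 0) \<subseteq> set_I0 pmax (\<lambda>x. x \<ge> 0)
       \<and> set_I0 pmax (\<lambda>x. x \<ge> 0) \<subseteq> set_J0 pmax (\<lambda>x. x \<ge> 0)"
proof (intro conjI subsetI equalityI)
  fix \<rho> assume a: "\<rho> \<in> set_I1 pmax (\<lambda>x. x \<le> 0)"
  then show "\<rho> \<in> set_I0 pmax (\<lambda>x. x \<le> 0)"
    using partA[of pmax \<rho> 1] unfolding set_I1_def set_I0_def eos1_def by auto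
next
  fix \<rho> assume a: "\<rho> \<in> set_I0 pmax (\<lambda>x. x \<le> 0)"
  then show "\<rho> \<in> set_J0 pmax (\<lambda>x. x \<le> 0)"
    using partB[of pmax \<rho> 1] unfolding set_J0_def set_I0_def by auto
next
  fix \<rho> assume a: "\<rho> \<in> set_I1 pmax (\<lambda>x. x = 0)"
  then show "\<rho> \<in> set_I0 pmax (\<lambda>x. x = 0) \<inter> {\<rho>. eos1 pmax \<rho>}"
    using partA[of pmax \<rho> 1] partA[of pmax \<rho> "-1"] unfolding set_I1_def set_I0_def eos1_def
    by force
next
  fix \<rho> assume a: "\<rho> \<in> set_I0 pmax (\<lambda>x. x = 0) \<inter> {\<rho>. eos1 pmax \<rho>}"
  then show "\<rho> \<in> set_I1 pmax (\<lambda>x. x = 0)"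
    using partD[of pmax \<rho>] unfolding set_I1_def set_I0_def by auto
next
  fix \<rho> assume a: "\<rho> \<in> set_I0 pmax (\<lambda>x. x = 0)"
  then show "\<rho> \<in> set_J0 pmax (\<lambda>x. x = 0)"
    using partB[of pmax \<rho> 1] partB[of pmax \<rho> "-1"] unfolding set_J0_def set_I0_def by force
next
  fix \<rho> assume a: "\<rho> \<in> set_J0 pmax (\<lambda>x. x = 0)"
  then show "\<rho> \<in> set_I0 pmax (\<lambda>x. x = 0)"
    using partC[of pmax \<rho>] unfolding set_J0_def set_I0_def by auto
next
  fix \<rho> assume a: "\<rho> \<in> set_I1 pmax (\<lambda>x. x \<ge> 0)"
  then show "\<rho> \<in> set_I0 pmax (\<lambda>x. x \<ge> 0)"
    using partA[of pmax \<rho> "-1"] unfolding set_I1_def set_I0_def eos1_def by auto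
next
  fix \<rho> assume a: "\<rho> \<in> set_I0 pmax (\<lambda>x. x \<ge> 0)"
  then show "\<rho> \<in> set_J0 pmax (\<lambda>x. x \<ge> 0)"
    using partB[of pmax \<rho> "-1"] unfolding set_J0_def set_I0_def by auto
qed

end
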